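(* Let $p$ be an idempotent in $(\beta\mathbb{N}, +)$, let $\langle C_n \rangle_{n=1}^\infty$ be a sequence of members of $p$, and let $\langle a_n \rangle_{n=1}^\infty$ be a sequence in $\mathbb{N}$. Then for each $n \in \mathbb{N}$ there exists a finite sequence $Y_n = \langle y_{n,j}\rangle_{j=1}^{a_n}$ in $\mathbb{N}$ of length $a_n$ with $\mathrm{FS}(Y_n) \subseteq C_n$, such that for every nonempty finite $F \subseteq \mathbb{N}$, $\sum_{n \in F} Y_n \subseteq C_{\min F}$.
   Context: $\beta\mathbb{N}$ is the set of ultrafilters on $\mathbb{N}$ with the extension of addition $p+q = \{A \subseteq \mathbb{N} : \{x : -x+A \in q\} \in p\}$, $-x+A=\{y: x+y\in A\}$; $p$ is idempotent if $p+p=p$. For a finite sequence $\langle x_n\rangle_{n=1}^k$, $\mathrm{FS}(\langle x_n\rangle_{n=1}^k) = \{\sum_{n\in H} x_n : \emptyset\neq H\subseteq\{1,\ldots,k\}\}$. For finite $F \subseteq \mathbb{N}$ and sequences $Y_n$, $\sum_{n \in F} Y_n = \{\sum_{n \in F} a_n : a_n \text{ is a term of } Y_n \text{ for each } n \in F\}$. *)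

theory Defs
  imports Main
begin

text \<open>The paper's N is the positive integers; we model it as the set PN of positive nats.\<close>
definition PN :: "nat set" where "PN = {n. 0 < n}"

definition ultrafilter_N :: "nat set set \<Rightarrow> bool" where
  "ultrafilter_N p \<longleftrightarrow>
     (\<forall>A\<in>p. A \<subseteq> PN) \<and> PN \<in> p \<and> {} \<notin> p \<and>
     (\<forall>A B. A \<in> p \<and> B \<in> p \<longrightarrow> A \<inter> B \<in> p) \<and>
     (\<forall>A B. A \<in> p \<and> A \<subseteq> B \<and> B \<subseteq> PN \<longrightarrow> B \<in> p) \<and>
     (\<forall>A. A \<subseteq> PN \<longrightarrow> A \<in> p \<or> PN - A \<in> p)"

definition shiftN :: "nat \<Rightarrow> nat set \<Rightarrow> nat set" where
  "shiftN x A = {y \<in> PN. x + y \<in> A}"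

definition uplus :: "nat set set \<Rightarrow> nat set set \<Rightarrow> nat set set" where
  "uplus p q = {A. A \<subseteq> PN \<and> {x \<in> PN. shiftN x A \<in> q} \<in> p}"

definition idempotent_N :: "nat set set \<Rightarrow> bool" where
  "idempotent_N p \<longleftrightarrow> ultrafilter_N p \<and> uplus p p = p"

definition FS_fin :: "(nat \<Rightarrow> nat) \<Rightarrow> nat \<Rightarrow> nat set" where
  "FS_fin y k = {(\<Sum>j\<in>H. y j) | H. H \<noteq> {} \<and> H \<subseteq> {1..k}}"

definition seq_sumset :: "nat set \<Rightarrow> (nat \<Rightarrow> nat) \<Rightarrow> (nat \<Rightarrow> nat \<Rightarrow> nat) \<Rightarrow> nat set" where
  "seq_sumset F a y = {(\<Sum>n\<in>F. y n (g n)) | g. \<forall>n\<in>F. g n \<in> {1..a n}}"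

end

theory Submission
  imports Defs
begin

definition Estar :: "nat set set \<Rightarrow> nat set \<Rightarrow> nat set" where
  "Estar p B = {x\<in>B. shiftN x B \<in> p}"

definition nxt :: "nat set set \<Rightarrow> (nat \<Rightarrow> nat set) \<Rightarrow> nat list \<Rightarrow> nat set" where
  "nxt p A zs = Estar p (A (length zs)) \<inter>
     (\<Inter>H\<in>{H. H \<noteq> {} \<and> H \<subseteq> {..<length zs}}. shiftN (\<Sum>i\<in>H. zs!i) (Estar p (A (Min H))))"

primrec zl :: "nat set set \<Rightarrow> (nat \<Rightarrow> nat set) \<Rightarrow> nat \<Rightarrow> nat list" where
  "zl p A 0 = []"
| "zl p A (Suc n) = zl p A n @ [SOME x. x \<in> nxt p A (zl p A n)]"

definition zz :: "nat set set \<Rightarrow> (nat \<Rightarrow> nat set) \<Rightarrow> nat \<Rightarrow> nat" where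
  "zz p A n = zl p A (Suc n) ! n"

lemma zl_len: "length (zl p A n) = n"
  by (induction n) auto

lemma zl_nth: "i < n \<Longrightarrow> zl p A n ! i = zz p A i"
proof (induction n)
  case 0 then show ?case by simp
next
  case (Suc n)
  show ?case
  proof (cases "i < n")
    case True then show ?thesis using Suc by (simp add: nth_append zl_len)
  next
    case False then have "i = n" using Suc by simp
    then show ?thesis by (simp add: zz_def)
  qed
qed

lemma zz_some: "zz p A n = (SOME x. x \<in> nxt p A (zl p A n))"
  by (simp add: zz_def nth_append zl_len)

lemma nxt_eq: "nxt p A (zl p A n) = Estar p (A n) \<inter>
     (\<Inter>H\<in>{H. H \<noteq> {} \<and> H \<subseteq> {..<n}}. shiftN (\<Sum>i\<in>H. zz p A i) (Estar p (A (Min H))))"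
proof -
  have "\<And>H. H \<subseteq> {..<n} \<Longrightarrow> (\<Sum>i\<in>H. zl p A n ! i) = (\<Sum>i\<in>H. zz p A i)"
    by (rule sum.cong) (auto simp: zl_nth)
  then show ?thesis unfolding nxt_def zl_len by auto
qed

lemma uf_parts1: assumes "ultrafilter_N p" shows "\<forall>A\<in>p. A \<subseteq> PN"
  using assms unfolding ultrafilter_N_def by (elim conjE) assumption

lemma uf_parts2: assumes "ultrafilter_N p" shows "PN \<in> p"
  using assms unfolding ultrafilter_N_def by (elim conjE) assumption

lemma uf_parts3: assumes "ultrafilter_N p" shows "{} \<notin> p"
  using assms unfolding ultrafilter_N_def by (elim conjE) assumption

lemma uf_parts4: assumes "ultrafilter_N p" shows "\<forall>A B. A \<in> p \<and> B \<in> p \<longrightarrow> A \<inter> B \<in> p"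
  using assms unfolding ultrafilter_N_def by (elim conjE) assumption


lemma uf_int: "ultrafilter_N p \<Longrightarrow> A \<in> p \<Longrightarrow> B \<in> p \<Longrightarrow> A \<inter> B \<in> p"
  using uf_parts4 by blast

lemma uf_sub: "ultrafilter_N p \<Longrightarrow> A \<in> p \<Longrightarrow> A \<subseteq> PN"
  using uf_parts1 by blast

lemma uf_empty: "ultrafilter_N p \<Longrightarrow> {} \<notin> p"
  using uf_parts3 by blast

lemma uf_ne: "ultrafilter_N p \<Longrightarrow> A \<in> p \<Longrightarrow> A \<noteq> {}"
  using uf_empty by metis

lemma uf_fin_int:
  assumes "ultrafilter_N p" "finite S" "B \<in> p" "\<forall>H\<in>S. f H \<in> p"
  shows "B \<inter> (\<Inter>H\<in>S. f H) \<in> p"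
  using assms(2,4)
proof (induction S rule: finite_induct)
  case empty then show ?case using assms(3) by simp
next
  case (insert x F)
  have "B \<inter> (\<Inter>H\<in>insert x F. f H) = (B \<inter> (\<Inter>H\<in>F. f H)) \<inter> f x" by auto
  then show ?case using insert uf_int[OF assms(1)] by simp
qed

lemma Estar_in:
  assumes "idempotent_N p" "A \<in> p" shows "Estar p A \<in> p"
proof -
  have uf: "ultrafilter_N p" using assms(1) by (simp add: idempotent_N_def)
  have "A \<in> uplus p p" using assms by (simp add: idempotent_N_def)
  then have "{x \<in> PN. shiftN x A \<in> p} \<in> p" unfolding uplus_def by blast
  then have "{x \<in> PN. shiftN x A \<in> p} \<inter> A \<in> p" using uf_int[OF uf] assms(2) by blast
  moreover have "{x \<in> PN. shiftN x A \<in> p} \<inter> A = Estar p A"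
    using uf_sub[OF uf assms(2)] unfolding Estar_def by auto
  ultimately show ?thesis by simp
qed

lemma shift_shift: "shiftN y (shiftN x A) = shiftN (x + y) A"
  unfolding shiftN_def PN_def by (auto simp: add.assoc)

lemma shift_Estar:
  assumes "idempotent_N p" "A \<in> p" "x \<in> Estar p A"
  shows "shiftN x (Estar p A) \<in> p"
proof -
  have "shiftN x (Estar p A) = Estar p (shiftN x A)"
    unfolding Estar_def shiftN_def[of x "{x \<in> A. shiftN x A \<in> p}"]
    using shift_shift[of _ x A] by (auto simp: shiftN_def)
  moreover have "shiftN x A \<in> p" using assms(3) Estar_def by blast
  ultimately show ?thesis using Estar_in[OF assms(1)] by simp
qed

lemma Estar_sub: "Estar p A \<subseteq> A" unfolding Estar_def by auto

lemma core_inv: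
  fixes A :: "nat \<Rightarrow> nat set"
  assumes "idempotent_N p" "\<forall>i. A i \<in> p"
  shows "\<forall>H. H \<noteq> {} \<and> H \<subseteq> {..<n} \<longrightarrow> (\<Sum>i\<in>H. zz p A i) \<in> Estar p (A (Min H))"
proof (induction n)
  case 0 then show ?case by auto
next
  case (Suc n)
  have uf: "ultrafilter_N p" using assms(1) by (simp add: idempotent_N_def)
  let ?S = "{H. H \<noteq> {} \<and> H \<subseteq> {..<n}}"
  have "finite ?S" by (rule finite_subset[of _ "Pow {..<n}"]) auto
  moreover have "\<forall>H\<in>?S. shiftN (\<Sum>i\<in>H. zz p A i) (Estar p (A (Min H))) \<in> p"
  proof
    fix H assume "H \<in> ?S"
    then have "(\<Sum>i\<in>H. zz p A i) \<in> Estar p (A (Min H))" using Suc[rule_format] by simp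
    then show "shiftN (\<Sum>i\<in>H. zz p A i) (Estar p (A (Min H))) \<in> p"
      using shift_Estar[OF assms(1)] assms(2) by blast
  qed
  moreover have E: "Estar p (A n) \<in> p" using Estar_in[OF assms(1)] assms(2) by blast
  ultimately have "nxt p A (zl p A n) \<in> p"
    unfolding nxt_eq by (intro uf_fin_int[OF uf])
  then have zin: "zz p A n \<in> nxt p A (zl p A n)"
    unfolding zz_some using uf_ne[OF uf] by (simp add: some_in_eq)
  show ?case
  proof (intro allI impI)
    fix H assume H: "H \<noteq> {} \<and> H \<subseteq> {..<Suc n}"
    show "(\<Sum>i\<in>H. zz p A i) \<in> Estar p (A (Min H))"
    proof (cases "n \<in> H")
      case False
      then have "H \<subseteq> {..<n}" using H less_Suc_eq by fastforce
      then show ?thesis using Suc[rule_format] H by simp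
    next
      case True
      show ?thesis
      proof (cases "H = {n}")
        case True
        then show ?thesis using zin unfolding nxt_eq by simp
      next
        case False
        define H' where "H' = H - {n}"
        have H'ne: "H' \<noteq> {}" using False True H'_def by auto
        have H'sub: "H' \<subseteq> {..<n}" using H H'_def by auto
        have fin: "finite H'" using H'sub by (rule finite_subset) simp
        have HH: "H = insert n H'" using True H'_def by auto
        have "n \<notin> H'" using H'_def by simp
        then have sumeq: "(\<Sum>i\<in>H. zz p A i) = zz p A n + (\<Sum>i\<in>H'. zz p A i)"
          using HH fin by simp
        have minH: "Min H = Min H'"
        proof -
          have "Min H = min n (Min H')" using HH fin H'ne by simp
          moreover have "Min H' < n" using Min_in[OF fin H'ne] H'sub by auto
          ultimately show ?thesis by simp
        qed
        have "zz p A n \<in> shiftN (\<Sum>i\<in>H'. zz p A i) (Estar p (A (Min H')))"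
        proof -
          have m: "H' \<in> {H. H \<noteq> {} \<and> H \<subseteq> {..<n}}" using H'ne H'sub by simp
          have "zz p A n \<in> (\<Inter>H\<in>{H. H \<noteq> {} \<and> H \<subseteq> {..<n}}. shiftN (\<Sum>i\<in>H. zz p A i) (Estar p (A (Min H))))"
            using zin unfolding nxt_eq by (rule IntD2)
          then show ?thesis using m by (rule INT_D)
        qed
        then show ?thesis using sumeq minH unfolding shiftN_def by (simp add: add.commute)
      qed
    qed
  qed
qed

lemma core:
  fixes A :: "nat \<Rightarrow> nat set"
  assumes "idempotent_N p" "\<forall>i. A i \<in> p" "\<forall>i j. i \<le> j \<longrightarrow> A j \<subseteq> A i"
  shows "\<exists>z. \<forall>H m. finite H \<and> H \<noteq> {} \<and> (\<forall>i\<in>H. m \<le> i) \<longrightarrow> (\<Sum>i\<in>H. z i) \<in> A m"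
proof (intro exI allI impI)
  fix H m assume H: "finite H \<and> H \<noteq> {} \<and> (\<forall>i\<in>H. (m::nat) \<le> i)"
  have "H \<subseteq> {..<Suc (Max H)}" using H by (auto simp: less_Suc_eq_le)
  then have "(\<Sum>i\<in>H. zz p A i) \<in> Estar p (A (Min H))"
    using core_inv[OF assms(1,2)] H by blast
  moreover have "m \<le> Min H" using H by auto
  then have "A (Min H) \<subseteq> A m" using assms(3) by blast
  ultimately show "(\<Sum>i\<in>H. zz p A i) \<in> A m" using Estar_sub by blast
qed


lemma off_Suc: "(1::nat) \<le> n \<Longrightarrow> (\<Sum>k\<in>{1..<Suc n}. a k) = (\<Sum>k\<in>{1..<n}. a k) + (a n :: nat)"
  by (simp add: sum.atLeastLessThan_Suc)

lemma off_mono: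
  fixes n m :: nat
  assumes "1 \<le> n"
  shows "n < m \<Longrightarrow> (\<Sum>k\<in>{1..<n}. a k) + (a n :: nat) \<le> (\<Sum>k\<in>{1..<m}. a k)"
proof (induction m)
  case 0 then show ?case by simp
next
  case (Suc m)
  show ?case
  proof (cases "n = m")
    case True then show ?thesis using off_Suc[OF assms(1)] by simp
  next
    case False
    then have "n < m" using Suc by simp
    then have "(\<Sum>k\<in>{1..<n}. a k) + a n \<le> (\<Sum>k\<in>{1..<m}. a k)" using Suc by simp
    moreover have "1 \<le> m" using \<open>n < m\<close> assms(1) by simp
    ultimately show ?thesis using off_Suc[of m a] by simp
  qed
qed

lemma off_ge:
  fixes n :: nat
  assumes "\<forall>k. 1 \<le> k \<longrightarrow> 0 < (a k :: nat)"
  shows "n - 1 \<le> (\<Sum>k\<in>{1..<n}. a k)"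
proof -
  have "(\<Sum>k\<in>{1..<n}. (1::nat)) \<le> (\<Sum>k\<in>{1..<n}. a k)"
    by (rule sum_mono) (use assms in auto)
  then show ?thesis by simp
qed

theorem theorem2p4:
  fixes p :: "nat set set" and C :: "nat \<Rightarrow> nat set" and a :: "nat \<Rightarrow> nat"
  assumes "idempotent_N p"
    and "\<forall>n\<in>PN. C n \<in> p"
    and "\<forall>n\<in>PN. a n \<in> PN"
  shows "\<exists>y :: nat \<Rightarrow> nat \<Rightarrow> nat.
           (\<forall>n\<in>PN. (\<forall>j\<in>{1..a n}. y n j \<in> PN) \<and> FS_fin (y n) (a n) \<subseteq> C n) \<and>
           (\<forall>F. finite F \<and> F \<noteq> {} \<and> F \<subseteq> PN \<longrightarrow> seq_sumset F a y \<subseteq> C (Min F))"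
proof -
  have uf: "ultrafilter_N p" using assms(1) by (simp add: idempotent_N_def)
  have apos: "\<forall>k. 1 \<le> k \<longrightarrow> 0 < a k" using assms(3) by (auto simp: PN_def)
  have Cp: "\<And>k. 1 \<le> k \<Longrightarrow> C k \<in> p" using assms(2) by (auto simp: PN_def)
  define off where "off n = (\<Sum>k\<in>{1..<n}. a k)" for n
  define I where "I i = {k. 1 \<le> k \<and> k \<le> Suc i \<and> off k \<le> i}" for i
  define A where "A i = PN \<inter> (\<Inter>k\<in>I i. C k)" for i
  have Ap: "\<forall>i. A i \<in> p"
  proof
    fix i
    have "finite (I i)" unfolding I_def by (rule finite_subset[of _ "{..Suc i}"]) auto
    moreover have "\<forall>k\<in>I i. C k \<in> p" using Cp unfolding I_def by simp
    ultimately show "A i \<in> p" unfolding A_def by (intro uf_fin_int[OF uf] uf_parts2[OF uf])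
  qed
  have Adec: "\<forall>i j. i \<le> j \<longrightarrow> A j \<subseteq> A i"
  proof (intro allI impI)
    fix i j :: nat assume "i \<le> j"
    then have "I i \<subseteq> I j" unfolding I_def by auto
    then show "A j \<subseteq> A i" unfolding A_def by blast
  qed
  have AC: "A i \<subseteq> C n" if "1 \<le> n" "off n \<le> i" for i n
  proof -
    have "n - 1 \<le> off n" unfolding off_def by (rule off_ge[OF apos])
    then have "n \<in> I i" using that unfolding I_def by simp
    then show ?thesis unfolding A_def by blast
  qed
  have APN: "A i \<subseteq> PN" for i unfolding A_def by blast
  obtain z where z: "\<forall>H m. finite H \<and> H \<noteq> {} \<and> (\<forall>i\<in>H. m \<le> i) \<longrightarrow> (\<Sum>i\<in>H. z i) \<in> A m"
    using core[OF assms(1) Ap Adec] by blast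
  have offm: "off n + a n \<le> off m" if "1 \<le> n" "n < m" for n m
    unfolding off_def by (rule off_mono[OF that(1) that(2)])
  define y where "y n j = z (off n + j - 1)" for n j
  show ?thesis
  proof (intro exI conjI ballI allI impI)
    fix n j assume n: "n \<in> PN" and j: "j \<in> {1..a n}"
    have "(\<Sum>i\<in>{off n + j - 1}. z i) \<in> A (off n + j - 1)" using z by blast
    then show "y n j \<in> PN" using APN unfolding y_def by auto
  next
    fix n assume n: "n \<in> PN"
    have n1: "1 \<le> n" using n by (simp add: PN_def)
    show "FS_fin (y n) (a n) \<subseteq> C n"
    proof
      fix x assume "x \<in> FS_fin (y n) (a n)"
      then obtain H where H: "H \<noteq> {}" "H \<subseteq> {1..a n}" and x: "x = (\<Sum>j\<in>H. y n j)"
        unfolding FS_fin_def by blast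
      define f where "f j = off n + j - 1" for j
      have inj: "inj_on f H"
      proof (rule inj_onI)
        fix u v assume "u \<in> H" "v \<in> H" "f u = f v"
        moreover have "1 \<le> u" "1 \<le> v" using H(2) \<open>u \<in> H\<close> \<open>v \<in> H\<close> by auto
        ultimately show "u = v" unfolding f_def by linarith
      qed
      have fin: "finite H" using H(2) finite_subset by blast
      have "x = (\<Sum>i\<in>f ` H. z i)" unfolding x y_def sum.reindex[OF inj] f_def by simp
      moreover have "\<forall>i\<in>f ` H. off n \<le> i"
      proof
        fix i assume "i \<in> f ` H"
        then obtain j where "j \<in> H" "i = f j" by blast
        moreover then have "1 \<le> j" using H(2) by auto
        ultimately show "off n \<le> i" unfolding f_def by linarith
      qed
      ultimately have "x \<in> A (off n)" using z fin H(1) by auto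
      then show "x \<in> C n" using AC[OF n1] by blast
    qed
  next
    fix F assume F: "finite F \<and> F \<noteq> {} \<and> F \<subseteq> PN"
    show "seq_sumset F a y \<subseteq> C (Min F)"
    proof
      fix x assume "x \<in> seq_sumset F a y"
      then obtain g where g: "\<forall>n\<in>F. g n \<in> {1..a n}" and x: "x = (\<Sum>n\<in>F. y n (g n))"
        unfolding seq_sumset_def by blast
      define idx where "idx k = off k + g k - 1" for k
      have F1: "\<And>k. k \<in> F \<Longrightarrow> 1 \<le> k" using F by (auto simp: PN_def)
      have lt: "idx k1 < idx k2" if "k1 \<in> F" "k2 \<in> F" "k1 < k2" for k1 k2
      proof -
        have "off k1 + a k1 \<le> off k2" using offm[OF F1[OF that(1)] that(3)] .
        moreover have "1 \<le> g k1" "g k1 \<le> a k1" "1 \<le> g k2" using g that by auto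
        ultimately show ?thesis unfolding idx_def by linarith
      qed
      have inj: "inj_on idx F"
      proof (rule inj_onI)
        fix u v assume "u \<in> F" "v \<in> F" "idx u = idx v"
        then show "u = v" using lt[of u v] lt[of v u] by (cases u v rule: linorder_cases) auto
      qed
      have minF: "Min F \<in> F" using F Min_in by blast
      have x2: "x = (\<Sum>i\<in>idx ` F. z i)" unfolding x y_def sum.reindex[OF inj] idx_def by simp
      have ge: "\<forall>i\<in>idx ` F. idx (Min F) \<le> i"
      proof
        fix i assume "i \<in> idx ` F"
        then obtain k where k: "k \<in> F" "i = idx k" by blast
        have "Min F \<le> k" using F k(1) by simp
        then show "idx (Min F) \<le> i" using lt[OF minF k(1)] k(2) by (cases "Min F = k") auto
      qed
      have "x \<in> A (idx (Min F))" using z F ge x2 by auto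
      moreover have "off (Min F) \<le> idx (Min F)" using g minF unfolding idx_def by auto
      ultimately show "x \<in> C (Min F)" using AC[OF F1[OF minF]] by blast
    qed
  qed
qed

end
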